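(* Let $\varepsilon\ge0$, $\mathcal L'\subseteq\mathcal L$, $\mathcal J'\subseteq\mathcal J$. If $B=\mathcal L'\cup\mathcal J'$ is a basis of $\mathrm{LP}(\theta,\varepsilon)$, then its basic solution $x\in\mathbb R^L$ satisfies, for $(ij)\in\mathcal L$, $$x_{ij}=\begin{cases}\sum_{k\in\mathsf C(\mathcal T(i))}\lambda_k-\sum_{\ell\in\mathsf S(\mathcal T(i))}(\mu_\ell-\varepsilon)&\text{if } i\text{ is a child of } j\text{ in }\mathcal G(\mathcal L',\mathcal J'),\\ \sum_{\ell\in\mathsf S(\mathcal T(j))}(\mu_\ell-\varepsilon)-\sum_{k\in\mathsf C(\mathcal T(j))}\lambda_k&\text{if } i\text{ is the parent of } j\text{ in }\mathcal G(\mathcal L',\mathcal J'),\\ 0&\text{if }(ij)\in\mathcal L\setminus\mathcal L'.\end{cases}$$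
   Context: $\mathcal I=\{1,\dots,I\}$ and $\mathcal J=\{1,\dots,J\}$ are disjoint node sets, $\mathcal L\subseteq\mathcal I\times\mathcal J$, $L=|\mathcal L|$, $\mathcal S_i=\{j:(ij)\in\mathcal L\}$, $\mathcal C_j=\{i:(ij)\in\mathcal L\}$. For $\lambda\in\mathbb R^I_{>0}$, $\mu\in\mathbb R^J_{>0}$, $\theta\in\mathbb R^L_{\ge0}$, $\mathrm{LP}(\theta,\varepsilon)$ in standard form is: maximize $\sum\theta_{ij}x_{ij}$ s.t. $\sum_{j\in\mathcal S_i}x_{ij}=\lambda_i$ ($i\in\mathcal I$), $\sum_{i\in\mathcal C_j}x_{ij}+\sigma_j=\mu_j-\varepsilon$ ($j\in\mathcal J$), $x,\sigma\ge0$, with variables indexed by $\mathcal L\cup\mathcal J$. A basis is $B\subseteq\mathcal L\cup\mathcal J$ with $|B|=I+J$ and invertible corresponding column submatrix; the basic solution is the unique solution of the equality constraints with all variables outside $B$ equal to $0$. $\mathcal G(\mathcal L',\mathcal J')$ is the subgraph of the bipartite graph $(\mathcal I\cup\mathcal J,\mathcal L)$ with edge set $\mathcal L'$; when $B$ is a basis it is a spanning forest (acyclic, containing all nodes, each tree containing exactly one node of $\mathcal J'$), and each tree is rooted at its node in $\mathcal J'$, which defines parent/child relations. $\mathcal T(v)$ is the subtree rooted at node $v$ including $v$, $\mathsf C(\mathcal T(v))=\mathcal T(v)\cap\mathcal I$, $\mathsf S(\mathcal T(v))=\mathcal T(v)\cap\mathcal J$. *)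

theory Defs
  imports Complex_Main
begin

(* Customer nodes i \<in> {1..I} are encoded as Inl i, server nodes j \<in> {1..J} as Inr j.
   LP variables: x_ij is Inl (i,j) for (i,j) \<in> L, slack \<sigma>_j is Inr j.
   Constraint rows: Inl i (for i \<in> {1..I}), Inr j (for j \<in> {1..J}). *)

type_synonym var = "(nat \<times> nat) + nat"
type_synonym row = "nat + nat"
type_synonym node = "nat + nat"

definition lp_vars :: "nat \<Rightarrow> (nat \<times> nat) set \<Rightarrow> var set" where
  "lp_vars J L = Inl ` L \<union> Inr ` {1..J}"

definition lp_rows :: "nat \<Rightarrow> nat \<Rightarrow> row set" where
  "lp_rows I J = Inl ` {1..I} \<union> Inr ` {1..J}"

fun lp_matrix :: "row \<Rightarrow> var \<Rightarrow> real" where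
  "lp_matrix (Inl i) (Inl (i', j)) = (if i = i' then 1 else 0)"
| "lp_matrix (Inl i) (Inr j) = 0"
| "lp_matrix (Inr j) (Inl (i, j')) = (if j = j' then 1 else 0)"
| "lp_matrix (Inr j) (Inr j') = (if j = j' then 1 else 0)"

fun lp_rhs :: "(nat \<Rightarrow> real) \<Rightarrow> (nat \<Rightarrow> real) \<Rightarrow> real \<Rightarrow> row \<Rightarrow> real" where
  "lp_rhs lam mu eps (Inl i) = lam i"
| "lp_rhs lam mu eps (Inr j) = mu j - eps"

definition is_basis :: "nat \<Rightarrow> nat \<Rightarrow> (nat \<times> nat) set \<Rightarrow> var set \<Rightarrow> bool" where
  "is_basis I J L B \<longleftrightarrow>
     B \<subseteq> lp_vars J L \<and> card B = I + J \<and>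
     (\<exists>M :: var \<Rightarrow> row \<Rightarrow> real.
        (\<forall>r\<in>lp_rows I J. \<forall>r'\<in>lp_rows I J.
            (\<Sum>c\<in>B. lp_matrix r c * M c r') = (if r = r' then 1 else 0)) \<and>
        (\<forall>c\<in>B. \<forall>c'\<in>B.
            (\<Sum>r\<in>lp_rows I J. M c r * lp_matrix r c') = (if c = c' then 1 else 0)))"

definition basic_solution ::
  "nat \<Rightarrow> nat \<Rightarrow> (nat \<times> nat) set \<Rightarrow> (nat \<Rightarrow> real) \<Rightarrow> (nat \<Rightarrow> real) \<Rightarrow> real \<Rightarrow> var set \<Rightarrow> var \<Rightarrow> real"
  where
  "basic_solution I J L lam mu eps B =
     (THE y. (\<forall>r\<in>lp_rows I J. (\<Sum>v\<in>lp_vars J L. lp_matrix r v * y v) = lp_rhs lam mu eps r)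
           \<and> (\<forall>v. v \<notin> B \<longrightarrow> y v = 0))"

definition gedges :: "(nat \<times> nat) set \<Rightarrow> (node \<times> node) set" where
  "gedges L' = {(Inl i, Inr j) | i j. (i, j) \<in> L'} \<union> {(Inr j, Inl i) | i j. (i, j) \<in> L'}"

definition roots :: "nat set \<Rightarrow> node set" where
  "roots J' = Inr ` J'"

definition depth :: "(nat \<times> nat) set \<Rightarrow> nat set \<Rightarrow> node \<Rightarrow> nat" where
  "depth L' J' v = (LEAST n. \<exists>r\<in>roots J'. (v, r) \<in> gedges L' ^^ n)"

(* parent relation of the rooted forest: (v, w) means w is the parent of v,
   i.e. w is the neighbour of v that is one step closer to the root *)
definition parent_rel :: "(nat \<times> nat) set \<Rightarrow> nat set \<Rightarrow> (node \<times> node) set" where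
  "parent_rel L' J' = {(v, w). (v, w) \<in> gedges L' \<and> v \<notin> roots J' \<and>
       (\<exists>r\<in>roots J'. (v, r) \<in> (gedges L')\<^sup>*) \<and> depth L' J' v = depth L' J' w + 1}"

definition is_child :: "(nat \<times> nat) set \<Rightarrow> nat set \<Rightarrow> node \<Rightarrow> node \<Rightarrow> bool" where
  "is_child L' J' v w \<longleftrightarrow> (v, w) \<in> parent_rel L' J'"

definition subtree :: "(nat \<times> nat) set \<Rightarrow> nat set \<Rightarrow> node \<Rightarrow> node set" where
  "subtree L' J' v = {u. (u, v) \<in> (parent_rel L' J')\<^sup>*}"

(* C(T) = T \<inter> I and S(T) = T \<inter> J *)
definition Cnodes :: "node set \<Rightarrow> nat set" where
  "Cnodes T = {k. Inl k \<in> T}"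

definition Snodes :: "node set \<Rightarrow> nat set" where
  "Snodes T = {l. Inr l \<in> T}"

end

theory Submission imports Defs begin

definition reach :: "(nat \<times> nat) set \<Rightarrow> nat set \<Rightarrow> node \<Rightarrow> bool" where
  "reach L' J' u \<longleftrightarrow> (\<exists>r\<in>roots J'. (u, r) \<in> (gedges L')\<^sup>*)"

lemma gedges_iff: "(u, w) \<in> gedges L' \<longleftrightarrow>
   (\<exists>a b. (a, b) \<in> L' \<and> ((u = Inl a \<and> w = Inr b) \<or> (u = Inr b \<and> w = Inl a)))"
  unfolding gedges_def by auto

lemma gedges_sym: "(u, w) \<in> gedges L' \<Longrightarrow> (w, u) \<in> gedges L'"
  unfolding gedges_iff by blast

lemma gedges_isl: "(u, w) \<in> gedges L' \<Longrightarrow> isl u \<longleftrightarrow> \<not> isl w"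
  unfolding gedges_iff by auto

lemma parity: "(u, r) \<in> gedges L' ^^ n \<Longrightarrow> r \<in> roots J' \<Longrightarrow> (even n \<longleftrightarrow> \<not> isl u)"
proof (induction n arbitrary: u)
  case 0
  then show ?case by (auto simp: roots_def)
next
  case (Suc n)
  then obtain y where "(u, y) \<in> gedges L'" "(y, r) \<in> gedges L' ^^ n" by (blast dest: relpow_Suc_D2)
  with Suc show ?case using gedges_isl by fastforce
qed

lemma depth_ex: assumes "reach L' J' u"
  shows "\<exists>r\<in>roots J'. (u, r) \<in> gedges L' ^^ depth L' J' u"
proof -
  from assms obtain r n where "r \<in> roots J'" "(u, r) \<in> gedges L' ^^ n"
    unfolding reach_def rtrancl_power by blast
  then have "\<exists>n. \<exists>r\<in>roots J'. (u, r) \<in> gedges L' ^^ n" by blast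
  then show ?thesis unfolding depth_def by (rule LeastI_ex)
qed

lemma depth_le: "(u, r) \<in> gedges L' ^^ n \<Longrightarrow> r \<in> roots J' \<Longrightarrow> depth L' J' u \<le> n"
  unfolding depth_def by (rule Least_le) blast

lemma depth_parity: "reach L' J' u \<Longrightarrow> (even (depth L' J' u) \<longleftrightarrow> \<not> isl u)"
  using depth_ex parity by blast

lemma reach_edge: assumes "(u, w) \<in> gedges L'" "reach L' J' w"
  shows "reach L' J' u" "depth L' J' u \<le> depth L' J' w + 1"
proof -
  from depth_ex[OF assms(2)] obtain r where r: "r \<in> roots J'" "(w, r) \<in> gedges L' ^^ depth L' J' w" by blast
  have "(u, r) \<in> gedges L' ^^ Suc (depth L' J' w)" using relpow_Suc_I2[OF assms(1) r(2)] .
  then show "reach L' J' u" "depth L' J' u \<le> depth L' J' w + 1"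
    using r depth_le unfolding reach_def rtrancl_power by fastforce+
qed

lemma depth_root: assumes "u \<in> roots J'" shows "depth L' J' u = 0"
proof -
  have "(u, u) \<in> gedges L' ^^ 0" by simp
  then show ?thesis using depth_le[where u=u and r=u and n=0] assms by simp
qed

lemma reach_root: "u \<in> roots J' \<Longrightarrow> reach L' J' u"
  unfolding reach_def by blast

lemma depth0_root: "reach L' J' u \<Longrightarrow> depth L' J' u = 0 \<Longrightarrow> u \<in> roots J'"
  using depth_ex[of L' J' u] by auto

lemma parent_props: assumes "(v, w) \<in> parent_rel L' J'"
  shows "(v, w) \<in> gedges L'" "reach L' J' v" "reach L' J' w" "v \<notin> roots J'"
    "depth L' J' v = Suc (depth L' J' w)"
proof -
  show 1: "(v, w) \<in> gedges L'" "reach L' J' v" "v \<notin> roots J'" "depth L' J' v = Suc (depth L' J' w)"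
    using assms unfolding parent_rel_def reach_def by auto
  show "reach L' J' w" using reach_edge(1)[OF gedges_sym[OF 1(1)] 1(2)] .
qed

lemma parent_ex: assumes "reach L' J' u" "u \<notin> roots J'"
  shows "\<exists>w. (u, w) \<in> parent_rel L' J'"
proof -
  from depth_ex[OF assms(1)] obtain r where r: "r \<in> roots J'" "(u, r) \<in> gedges L' ^^ depth L' J' u" by blast
  have "depth L' J' u \<noteq> 0" using depth0_root assms by blast
  then obtain n where n: "depth L' J' u = Suc n" by (cases "depth L' J' u") auto
  with r have "(u, r) \<in> gedges L' ^^ Suc n" by simp
  then obtain w where w: "(u, w) \<in> gedges L'" "(w, r) \<in> gedges L' ^^ n" by (rule relpow_Suc_E2)
  have rw: "reach L' J' w" using w r unfolding reach_def rtrancl_power by blast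
  have "depth L' J' w \<le> n" using depth_le w r by blast
  moreover have "depth L' J' u \<le> depth L' J' w + 1" using reach_edge(2)[OF w(1) rw] .
  ultimately have "depth L' J' u = depth L' J' w + 1" using n by linarith
  then show ?thesis using w assms unfolding parent_rel_def reach_def by blast
qed

lemma edge_parent: assumes "(u, w) \<in> gedges L'" "reach L' J' u"
  shows "(u, w) \<in> parent_rel L' J' \<or> (w, u) \<in> parent_rel L' J'"
proof -
  have rw: "reach L' J' w" using reach_edge(1)[OF gedges_sym[OF assms(1)] assms(2)] .
  have d1: "depth L' J' u \<le> depth L' J' w + 1" using reach_edge(2)[OF assms(1) rw] .
  have d2: "depth L' J' w \<le> depth L' J' u + 1" using reach_edge(2)[OF gedges_sym[OF assms(1)] assms(2)] .
  have "depth L' J' u \<noteq> depth L' J' w"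
    using depth_parity[OF assms(2)] depth_parity[OF rw] gedges_isl[OF assms(1)] by auto
  then consider "depth L' J' u = depth L' J' w + 1" | "depth L' J' w = depth L' J' u + 1" using d1 d2 by linarith
  then show ?thesis
  proof cases
    case 1
    then have "u \<notin> roots J'" using depth_root by fastforce
    then show ?thesis using 1 assms unfolding parent_rel_def reach_def by blast
  next
    case 2
    then have "w \<notin> roots J'" using depth_root by fastforce
    then show ?thesis using 2 rw gedges_sym[OF assms(1)] unfolding parent_rel_def reach_def by blast
  qed
qed

definition par :: "(nat \<times> nat) set \<Rightarrow> nat set \<Rightarrow> node \<Rightarrow> node" where
  "par L' J' u = (SOME w. (u, w) \<in> parent_rel L' J')"

fun evar :: "node \<Rightarrow> node \<Rightarrow> var" where
  "evar (Inl a) (Inr b) = Inl (a, b)"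
| "evar (Inr b) (Inl a) = Inl (a, b)"
| "evar _ _ = Inr 0"

fun sg :: "node \<Rightarrow> real" where
  "sg (Inl _) = 1"
| "sg (Inr _) = -1"

fun chain :: "(nat \<times> nat) set \<Rightarrow> nat set \<Rightarrow> nat \<Rightarrow> node \<Rightarrow> var \<Rightarrow> real" where
  "chain L' J' 0 u = (\<lambda>v. if v = Inr (projr u) then 1 else 0)"
| "chain L' J' (Suc n) u = (\<lambda>v. (if v = evar u (par L' J' u) then 1 else 0) - chain L' J' n (par L' J' u) v)"

lemma if10_mult: "(if P then 1 else 0) * (a::real) = (if P then a else 0)" by simp

lemma A_Inl: "lp_matrix r (Inl (a, b)) = of_bool (r = Inl a) + of_bool (r = Inr b)"
  by (cases r) auto

lemma A_Inr: "lp_matrix r (Inr b) = of_bool (r = Inr b)"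
  by (cases r) auto

lemma sum_ofb: "finite T \<Longrightarrow> (\<Sum>r\<in>T. f r * of_bool (r = z)) = (if z \<in> T then f z else (0::real))"
  by (simp add: of_bool_def if_distrib sum.delta' cong: if_cong)

lemma sum_ind: "finite S \<Longrightarrow> e \<in> S \<Longrightarrow> (\<Sum>v\<in>S. f v * (if v = e then 1 else 0)) = (f e :: real)"
  by (simp add: if_distrib sum.delta' cong: if_cong)

lemma evar_edge: assumes "(u, w) \<in> gedges L'"
  shows "evar u w \<in> Inl ` L'" "\<And>r. lp_matrix r (evar u w) = of_bool (r = u) + of_bool (r = w)"
   "evar u w = evar w u"
  using assms unfolding gedges_iff by (auto simp: A_Inl)

lemma evar_inj: assumes "(u, w1) \<in> gedges L'" "(u, w2) \<in> gedges L'" "evar u w1 = evar u w2"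
  shows "w1 = w2"
  using assms unfolding gedges_iff by auto

lemma gedges_alt: "gedges L' = (\<lambda>(i, j). (Inl i, Inr j)) ` L' \<union> (\<lambda>(i, j). (Inr j, Inl i)) ` L'"
  unfolding gedges_def by auto

lemma finite_gedges: "finite L' \<Longrightarrow> finite (gedges L')"
  unfolding gedges_alt by auto

lemma sub_depth: "(u, v) \<in> (parent_rel L' J')\<^sup>* \<Longrightarrow> depth L' J' v \<le> depth L' J' u \<and> (u \<noteq> v \<longrightarrow> depth L' J' v < depth L' J' u)"
proof (induction rule: converse_rtrancl_induct)
  case base
  then show ?case by simp
next
  case (step y z)
  then show ?case using parent_props(5)[OF step(1)] by auto
qed

lemma par_notin_sub: "(v, w) \<in> parent_rel L' J' \<Longrightarrow> w \<notin> subtree L' J' v"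
  unfolding subtree_def using sub_depth parent_props(5) by fastforce

lemma sub_mem: assumes "(v, w) \<in> parent_rel L' J'" "u \<in> subtree L' J' v"
  shows "\<exists>q. (u, q) \<in> parent_rel L' J'"
proof -
  have "(u, v) \<in> (parent_rel L' J')\<^sup>*" using assms(2) unfolding subtree_def by blast
  then show ?thesis by (rule converse_rtranclE) (use assms(1) in auto)
qed

lemma sub_reach: assumes "(v, w) \<in> parent_rel L' J'" "u \<in> subtree L' J' v"
  shows "reach L' J' u" "u \<notin> roots J'" "u \<in> fst ` gedges L'"
  using sub_mem[OF assms] parent_props(1,2,4) by force+

lemma boundary:
  assumes pu: "\<And>v w1 w2. (v, w1) \<in> parent_rel L' J' \<Longrightarrow> (v, w2) \<in> parent_rel L' J' \<Longrightarrow> w1 = w2"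
    and vw: "(v, w) \<in> parent_rel L' J'" and uz: "(u, z) \<in> gedges L'"
    and u: "u \<in> subtree L' J' v" and z: "z \<notin> subtree L' J' v"
  shows "u = v \<and> z = w"
proof -
  have ru: "reach L' J' u" using sub_reach[OF vw u] by blast
  have uv: "(u, v) \<in> (parent_rel L' J')\<^sup>*" using u unfolding subtree_def by blast
  have "(z, u) \<notin> parent_rel L' J'"
  proof
    assume "(z, u) \<in> parent_rel L' J'"
    then have "(z, v) \<in> (parent_rel L' J')\<^sup>*" using uv by (rule converse_rtrancl_into_rtrancl)
    then show False using z unfolding subtree_def by blast
  qed
  then have uzP: "(u, z) \<in> parent_rel L' J'" using edge_parent[OF uz ru] by blast
  show ?thesis
  proof (cases "u = v")
    case True
    then show ?thesis using pu[OF uzP] vw by blast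
  next
    case False
    from uv False obtain q where "(u, q) \<in> parent_rel L' J'" "(q, v) \<in> (parent_rel L' J')\<^sup>*"
      by (blast elim: converse_rtranclE)
    then show ?thesis using pu[OF uzP] z unfolding subtree_def by blast
  qed
qed

lemma sum_split: assumes "finite T"
  shows "(\<Sum>r\<in>T. sg r * lp_rhs lam mu eps r) = (\<Sum>k\<in>Cnodes T. lam k) - (\<Sum>l\<in>Snodes T. mu l - eps)"
proof -
  have T: "T = Inl ` Cnodes T \<union> Inr ` Snodes T" unfolding Cnodes_def Snodes_def
    by (auto, metis sum.exhaust_sel isl_def image_eqI mem_Collect_eq) 
  have fC: "finite (Cnodes T)" unfolding Cnodes_def using finite_vimageI[OF assms, of Inl] by (simp add: vimage_def)
  have fS: "finite (Snodes T)" unfolding Snodes_def using finite_vimageI[OF assms, of Inr] by (simp add: vimage_def)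
  have "(\<Sum>r\<in>T. sg r * lp_rhs lam mu eps r) = (\<Sum>r\<in>Inl ` Cnodes T. sg r * lp_rhs lam mu eps r) + (\<Sum>r\<in>Inr ` Snodes T. sg r * lp_rhs lam mu eps r)"
    by (subst T, rule sum.union_disjoint) (use fC fS in auto)
  also have "\<dots> = (\<Sum>k\<in>Cnodes T. lam k) - (\<Sum>l\<in>Snodes T. mu l - eps)"
    by (simp add: sum.reindex sum_negf[symmetric])
  finally show ?thesis .
qed

locale lpset =
  fixes I J :: nat and L L' :: "(nat \<times> nat) set" and J' :: "nat set"
  assumes L_sub: "L \<subseteq> {1..I} \<times> {1..J}" and L'_sub: "L' \<subseteq> L" and J'_sub: "J' \<subseteq> {1..J}"
    and basis: "is_basis I J L (Inl ` L' \<union> Inr ` J')"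
begin

abbreviation "BB \<equiv> Inl ` L' \<union> Inr ` J'"
abbreviation "RR \<equiv> lp_rows I J"
abbreviation "VV \<equiv> lp_vars J L"

lemma fin_L: "finite L" using L_sub finite_subset by blast
lemma fin_L': "finite L'" using L'_sub fin_L finite_subset by blast
lemma fin_R: "finite RR" unfolding lp_rows_def by simp
lemma fin_V: "finite VV" unfolding lp_vars_def using fin_L by simp
lemma B_V: "BB \<subseteq> VV" unfolding lp_vars_def using L'_sub J'_sub by auto
lemma fin_B: "finite BB" using fin_V B_V finite_subset by blast

lemma E_R: "(u, w) \<in> gedges L' \<Longrightarrow> u \<in> RR"
  unfolding gedges_iff lp_rows_def using L'_sub L_sub by fastforce

definition MM where "MM = (SOME M :: var \<Rightarrow> row \<Rightarrow> real.
        (\<forall>r\<in>RR. \<forall>r'\<in>RR. (\<Sum>c\<in>BB. lp_matrix r c * M c r') = (if r = r' then 1 else 0)) \<and>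
        (\<forall>c\<in>BB. \<forall>c'\<in>BB. (\<Sum>r\<in>RR. M c r * lp_matrix r c') = (if c = c' then 1 else 0)))"

lemma MM: "\<forall>r\<in>RR. \<forall>r'\<in>RR. (\<Sum>c\<in>BB. lp_matrix r c * MM c r') = (if r = r' then 1 else 0)"
  "\<forall>c\<in>BB. \<forall>c'\<in>BB. (\<Sum>r\<in>RR. MM c r * lp_matrix r c') = (if c = c' then 1 else 0)"
  using someI_ex[OF basis[unfolded is_basis_def, THEN conjunct2, THEN conjunct2]] unfolding MM_def by blast+

lemma sumV_B: assumes "\<forall>v. v \<notin> BB \<longrightarrow> y v = 0"
  shows "(\<Sum>v\<in>VV. lp_matrix r v * y v) = (\<Sum>v\<in>BB. lp_matrix r v * y v)"
  by (rule sum.mono_neutral_right[OF fin_V B_V]) (use assms in auto)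

lemma inj0: assumes sup: "\<forall>v. v \<notin> BB \<longrightarrow> y v = 0"
  and eq: "\<forall>r\<in>RR. (\<Sum>v\<in>VV. lp_matrix r v * y v) = 0"
  shows "y c = 0"
proof (cases "c \<in> BB")
  case False then show ?thesis using sup by blast
next
  case True
  have "y c = (\<Sum>c'\<in>BB. (if c = c' then 1 else 0) * y c')"
    using True fin_B by (simp only: if10_mult sum.delta) simp
  also have "\<dots> = (\<Sum>c'\<in>BB. (\<Sum>r\<in>RR. MM c r * lp_matrix r c') * y c')"
    using MM(2) True by simp
  also have "\<dots> = (\<Sum>r\<in>RR. MM c r * (\<Sum>c'\<in>BB. lp_matrix r c' * y c'))"
    by (simp add: sum_distrib_left sum_distrib_right sum.swap[of _ BB] mult_ac)
  also have "\<dots> = (\<Sum>r\<in>RR. MM c r * (\<Sum>v\<in>VV. lp_matrix r v * y v))"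
    using sumV_B[OF sup] by simp
  also have "\<dots> = 0" using eq by simp
  finally show ?thesis .
qed

definition "solP lam mu eps y \<longleftrightarrow> (\<forall>r\<in>RR. (\<Sum>v\<in>VV. lp_matrix r v * y v) = lp_rhs lam mu eps r)
           \<and> (\<forall>v. v \<notin> BB \<longrightarrow> y v = 0)"

lemma sol_ex: "solP lam mu eps (\<lambda>c. if c \<in> BB then (\<Sum>r'\<in>RR. MM c r' * lp_rhs lam mu eps r') else 0)"
  (is "solP _ _ _ ?y")
proof -
  have "(\<Sum>v\<in>VV. lp_matrix r v * ?y v) = lp_rhs lam mu eps r" if r: "r \<in> RR" for r
  proof -
    have "(\<Sum>v\<in>VV. lp_matrix r v * ?y v) = (\<Sum>v\<in>BB. lp_matrix r v * ?y v)"
      by (rule sumV_B) simp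
    also have "\<dots> = (\<Sum>v\<in>BB. lp_matrix r v * (\<Sum>r'\<in>RR. MM v r' * lp_rhs lam mu eps r'))"
      by simp
    also have "\<dots> = (\<Sum>r'\<in>RR. (\<Sum>v\<in>BB. lp_matrix r v * MM v r') * lp_rhs lam mu eps r')"
      by (simp add: sum_distrib_left sum_distrib_right sum.swap[of _ BB] mult_ac)
    also have "\<dots> = (\<Sum>r'\<in>RR. (if r = r' then 1 else 0) * lp_rhs lam mu eps r')"
      using MM(1) r by simp
    also have "\<dots> = lp_rhs lam mu eps r"
      using r fin_R by (simp only: if10_mult sum.delta) simp
    finally show ?thesis .
  qed
  then show ?thesis unfolding solP_def by simp
qed

lemma sol_uniq: assumes "solP lam mu eps y1" "solP lam mu eps y2" shows "y1 = y2"
proof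
  fix c
  have "(\<lambda>v. y1 v - y2 v) c = 0"
  proof (rule inj0)
    show "\<forall>v. v \<notin> BB \<longrightarrow> y1 v - y2 v = 0" using assms unfolding solP_def by simp
    show "\<forall>r\<in>RR. (\<Sum>v\<in>VV. lp_matrix r v * (y1 v - y2 v)) = 0"
      using assms unfolding solP_def by (simp add: right_diff_distrib sum_subtractf)
  qed
  then show "y1 c = y2 c" by simp
qed

lemma basic_sol: "solP lam mu eps (basic_solution I J L lam mu eps BB)"
proof -
  have e: "basic_solution I J L lam mu eps BB = (THE y. solP lam mu eps y)"
    unfolding basic_solution_def solP_def by simp
  have "solP lam mu eps (THE y. solP lam mu eps y)"
    using theI[of "solP lam mu eps", OF sol_ex] sol_uniq sol_ex by blast
  then show ?thesis unfolding e .
qed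

lemma evar_depth: assumes "(u, w) \<in> gedges L'" "evar u w = Inl (a, b)"
  shows "(Inl a = u \<and> Inr b = w) \<or> (Inl a = w \<and> Inr b = u)"
  using assms unfolding gedges_iff by auto

lemma chain_props: "reach L' J' u \<Longrightarrow> depth L' J' u = n \<Longrightarrow>
   (\<forall>v. v \<notin> BB \<longrightarrow> chain L' J' n u v = 0) \<and>
   (\<forall>r. (\<Sum>v\<in>VV. lp_matrix r v * chain L' J' n u v) = of_bool (r = u)) \<and>
   (\<forall>a b. chain L' J' n u (Inl (a, b)) \<noteq> 0 \<longrightarrow> depth L' J' (Inl a) \<le> n \<and> depth L' J' (Inr b) \<le> n)"
proof (induction n arbitrary: u)
  case 0
  then have "u \<in> roots J'" using depth0_root by blast
  then obtain b where b: "u = Inr b" "b \<in> J'" unfolding roots_def by blast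
  then have bV: "Inr b \<in> VV" using B_V by blast
  show ?case using b sum_ind[OF fin_V bV] by (simp add: A_Inr)
next
  case (Suc n)
  have "u \<notin> roots J'" using Suc.prems depth_root by fastforce
  then have uw: "(u, par L' J' u) \<in> parent_rel L' J'"
    using parent_ex[OF Suc.prems(1)] unfolding par_def by (metis someI_ex)
  define w where "w = par L' J' u"
  have uw': "(u, w) \<in> parent_rel L' J'" using uw w_def by simp
  note pp = parent_props[OF uw']
  have dw: "depth L' J' w = n" using pp(5) Suc.prems by simp
  note IH = Suc.IH[OF pp(3) dw]
  have eB: "evar u w \<in> BB" using evar_edge(1)[OF pp(1)] by blast
  then have eV: "evar u w \<in> VV" using B_V by blast
  have ch: "chain L' J' (Suc n) u = (\<lambda>v. (if v = evar u w then 1 else 0) - chain L' J' n w v)"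
    by (simp add: w_def)
  have P1: "\<forall>v. v \<notin> BB \<longrightarrow> chain L' J' (Suc n) u v = 0" using IH eB ch by auto
  have P2: "(\<Sum>v\<in>VV. lp_matrix r v * chain L' J' (Suc n) u v) = of_bool (r = u)" for r
  proof -
    have "(\<Sum>v\<in>VV. lp_matrix r v * chain L' J' (Suc n) u v)
       = (\<Sum>v\<in>VV. lp_matrix r v * (if v = evar u w then 1 else 0)) - (\<Sum>v\<in>VV. lp_matrix r v * chain L' J' n w v)"
      unfolding ch by (simp add: right_diff_distrib sum_subtractf)
    also have "\<dots> = lp_matrix r (evar u w) - of_bool (r = w)"
      using sum_ind[OF fin_V eV] IH by simp
    finally show ?thesis using evar_edge(2)[OF pp(1)] by simp
  qed
  have P3: "depth L' J' (Inl a) \<le> Suc n \<and> depth L' J' (Inr b) \<le> Suc n"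
    if nz: "chain L' J' (Suc n) u (Inl (a, b)) \<noteq> 0" for a b
  proof (cases "Inl (a, b) = evar u w")
    case True
    then show ?thesis using evar_depth[OF pp(1) True[symmetric]] pp(5) Suc.prems by auto
  next
    case False
    then have "chain L' J' n w (Inl (a, b)) \<noteq> 0" using nz unfolding ch by simp
    then show ?thesis using IH by fastforce
  qed
  show ?case using P1 P2 P3 by blast
qed

lemma par_uniq: assumes 1: "(v, w1) \<in> parent_rel L' J'" and 2: "(v, w2) \<in> parent_rel L' J'"
  shows "w1 = w2"
proof (rule ccontr)
  assume ne: "w1 \<noteq> w2"
  note p1 = parent_props[OF 1] and p2 = parent_props[OF 2]
  define c1 where "c1 = chain L' J' (depth L' J' w1) w1"
  define c2 where "c2 = chain L' J' (depth L' J' w2) w2"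
  define e1 where "e1 = evar v w1"
  define e2 where "e2 = evar v w2"
  note C1 = chain_props[OF p1(3) refl, folded c1_def] and C2 = chain_props[OF p2(3) refl, folded c2_def]
  define y where "y = (\<lambda>x. (if x = e1 then 1 else 0) - c1 x - ((if x = e2 then 1 else 0) - c2 x))"
  have e1B: "e1 \<in> BB" using evar_edge(1)[OF p1(1)] e1_def by blast
  have e2B: "e2 \<in> BB" using evar_edge(1)[OF p2(1)] e2_def by blast
  have e1V: "e1 \<in> VV" and e2V: "e2 \<in> VV" using e1B e2B B_V by blast+
  have sup: "\<forall>x. x \<notin> BB \<longrightarrow> y x = 0" using C1 C2 e1B e2B unfolding y_def by auto
  have eq: "\<forall>r\<in>RR. (\<Sum>x\<in>VV. lp_matrix r x * y x) = 0"
  proof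
    fix r
    have "(\<Sum>x\<in>VV. lp_matrix r x * y x) =
      ((\<Sum>x\<in>VV. lp_matrix r x * (if x = e1 then 1 else 0)) - (\<Sum>x\<in>VV. lp_matrix r x * c1 x))
      - ((\<Sum>x\<in>VV. lp_matrix r x * (if x = e2 then 1 else 0)) - (\<Sum>x\<in>VV. lp_matrix r x * c2 x))"
      unfolding y_def by (simp add: right_diff_distrib sum_subtractf)
    also have "\<dots> = (lp_matrix r e1 - of_bool (r = w1)) - (lp_matrix r e2 - of_bool (r = w2))"
      using sum_ind[OF fin_V e1V] sum_ind[OF fin_V e2V] C1 C2 by simp
    also have "\<dots> = 0" using evar_edge(2)[OF p1(1)] evar_edge(2)[OF p2(1)] e1_def e2_def by simp
    finally show "(\<Sum>x\<in>VV. lp_matrix r x * y x) = 0" .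
  qed
  have "e1 \<noteq> e2" using evar_inj[OF p1(1) p2(1)] ne e1_def e2_def by blast
  moreover obtain a b where ab: "e1 = Inl (a, b)" using evar_edge(1)[OF p1(1)] e1_def by auto
  moreover have "c1 e1 = 0"
  proof (rule ccontr)
    assume "c1 e1 \<noteq> 0"
    then have "depth L' J' (Inl a) \<le> depth L' J' w1 \<and> depth L' J' (Inr b) \<le> depth L' J' w1"
      using C1 ab by blast
    then show False using evar_depth[OF p1(1) ab[unfolded e1_def]] p1(5) by auto
  qed
  moreover have "c2 e1 = 0"
  proof (rule ccontr)
    assume "c2 e1 \<noteq> 0"
    then have "depth L' J' (Inl a) \<le> depth L' J' w2 \<and> depth L' J' (Inr b) \<le> depth L' J' w2"
      using C2 ab by blast
    then show False using evar_depth[OF p1(1) ab[unfolded e1_def]] p2(5) p1(5) by auto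
  qed
  ultimately have "y e1 = 1" unfolding y_def by simp
  moreover have "y e1 = 0" by (rule inj0[OF sup eq])
  ultimately show False by simp
qed


lemma main: assumes vw: "(v, w) \<in> parent_rel L' J'"
  shows "(\<Sum>r\<in>subtree L' J' v. sg r * lp_rhs lam mu eps r)
      = sg v * basic_solution I J L lam mu eps BB (evar v w)"
proof -
  define x where "x = basic_solution I J L lam mu eps BB"
  define T where "T = subtree L' J' v"
  define e where "e = evar v w"
  have sol: "solP lam mu eps x" unfolding x_def by (rule basic_sol)
  have TE: "T \<subseteq> fst ` gedges L'" using sub_reach(3)[OF vw] T_def by blast
  have fT: "finite T" using TE finite_gedges[OF fin_L'] finite_subset by blast
  have TR: "T \<subseteq> RR" using TE E_R by force
  have pp: "(v, w) \<in> gedges L'" using parent_props(1)[OF vw] .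
  have eB: "e \<in> Inl ` L'" using evar_edge(1)[OF pp] e_def by blast
  then have eV: "e \<in> VV" using B_V by blast
  have vT: "v \<in> T" unfolding T_def subtree_def by simp
  have wT: "w \<notin> T" unfolding T_def using par_notin_sub[OF vw] .
  have bd: "u = v \<and> z = w" if "(u, z) \<in> gedges L'" "u \<in> T" "z \<notin> T" for u z
    using boundary[of L' J' v w u z] par_uniq vw that T_def by blast
  have pw: "x v' * (\<Sum>r\<in>T. sg r * lp_matrix r v') = (if v' = e then sg v * x e else 0)"
    if v'V: "v' \<in> VV" for v'
  proof (cases v')
    case (Inr b)
    have "v' \<noteq> e" using eB Inr by blast
    moreover have "x v' * (\<Sum>r\<in>T. sg r * lp_matrix r v') = 0"
    proof (cases "Inr b \<in> T")
      case True
      then have "Inr b \<notin> roots J'" using sub_reach(2)[OF vw] T_def by blast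
      then have "v' \<notin> BB" using Inr unfolding roots_def by auto
      then show ?thesis using sol unfolding solP_def by simp
    next
      case False
      then show ?thesis using Inr by (simp add: A_Inr sum_ofb[OF fT])
    qed
    ultimately show ?thesis by simp
  next
    case (Inl ab)
    then obtain a b where ab: "v' = Inl (a, b)" by (cases ab) auto
    show ?thesis
    proof (cases "(a, b) \<in> L'")
      case False
      then have "v' \<notin> BB" using ab by auto
      moreover then have "v' \<noteq> e" using eB by blast
      ultimately show ?thesis using sol unfolding solP_def by simp
    next
      case True
      have g: "(\<Sum>r\<in>T. sg r * lp_matrix r v') = (if Inl a \<in> T then 1 else 0) - (if Inr b \<in> T then 1 else 0)"
        using ab fT by (simp add: A_Inl distrib_left sum.distrib sum_ofb)
      have E1: "(Inl a, Inr b) \<in> gedges L'" and E2: "(Inr b, Inl a) \<in> gedges L'"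
        using True unfolding gedges_def by auto
      show ?thesis
      proof (cases "v' = e")
        case True
        then have "(Inl a = v \<and> Inr b = w) \<or> (Inl a = w \<and> Inr b = v)"
          using evar_depth[OF pp] ab e_def by simp
        then show ?thesis using True g vT wT by auto
      next
        case False
        have "(Inl a \<in> T) = (Inr b \<in> T)"
        proof (rule ccontr)
          assume "(Inl a \<in> T) \<noteq> (Inr b \<in> T)"
          then consider "Inl a \<in> T" "Inr b \<notin> T" | "Inr b \<in> T" "Inl a \<notin> T" by blast
          then show False
          proof cases
            case 1
            then have "Inl a = v \<and> Inr b = w" using bd[OF E1] by blast
            then show False using False ab e_def by auto
          next
            case 2
            then have "Inr b = v \<and> Inl a = w" using bd[OF E2] by blast
            then show False using False ab e_def by auto
          qed
        qed
        then show ?thesis using g False by simp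
      qed
    qed
  qed
  have "(\<Sum>r\<in>T. sg r * lp_rhs lam mu eps r) = (\<Sum>r\<in>T. sg r * (\<Sum>v'\<in>VV. lp_matrix r v' * x v'))"
    using sol TR unfolding solP_def by (intro sum.cong) auto
  also have "\<dots> = (\<Sum>v'\<in>VV. x v' * (\<Sum>r\<in>T. sg r * lp_matrix r v'))"
    by (simp add: sum_distrib_left sum.swap[of _ T] mult_ac)
  also have "\<dots> = (\<Sum>v'\<in>VV. (if v' = e then sg v * x e else 0))"
    using pw by (intro sum.cong) auto
  also have "\<dots> = sg v * x e" using eV fin_V by (simp add: sum.delta')
  finally show ?thesis unfolding T_def x_def e_def .
qed

lemma fin_sub: "(v, w) \<in> parent_rel L' J' \<Longrightarrow> finite (subtree L' J' v)"
  using sub_reach(3)[of v w L' J'] finite_gedges[OF fin_L'] finite_subset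
  by (metis finite_imageI subsetI)

end

theorem lemma2:
  fixes I J :: nat and L L' :: "(nat \<times> nat) set" and J' :: "nat set"
    and lam mu :: "nat \<Rightarrow> real" and theta :: "nat \<times> nat \<Rightarrow> real" and eps :: real
  assumes L_sub: "L \<subseteq> {1..I} \<times> {1..J}"
    and lam_pos: "\<forall>i\<in>{1..I}. lam i > 0"
    and mu_pos: "\<forall>j\<in>{1..J}. mu j > 0"
    and theta_nonneg: "\<forall>l\<in>L. theta l \<ge> 0"
    and eps_nonneg: "eps \<ge> 0"
    and L'_sub: "L' \<subseteq> L"
    and J'_sub: "J' \<subseteq> {1..J}"
    and basis: "is_basis I J L (Inl ` L' \<union> Inr ` J')"
  shows "\<forall>(i, j)\<in>L.
     let x = basic_solution I J L lam mu eps (Inl ` L' \<union> Inr ` J') (Inl (i, j)) in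
     (is_child L' J' (Inl i) (Inr j) \<longrightarrow>
        x = (\<Sum>k\<in>Cnodes (subtree L' J' (Inl i)). lam k)
            - (\<Sum>l\<in>Snodes (subtree L' J' (Inl i)). mu l - eps)) \<and>
     (is_child L' J' (Inr j) (Inl i) \<longrightarrow>
        x = (\<Sum>l\<in>Snodes (subtree L' J' (Inr j)). mu l - eps)
            - (\<Sum>k\<in>Cnodes (subtree L' J' (Inr j)). lam k)) \<and>
     ((i, j) \<notin> L' \<longrightarrow> x = 0)"
proof -
  interpret lpset I J L L' J' using L_sub L'_sub J'_sub basis by unfold_locales
  have "let x = basic_solution I J L lam mu eps (Inl ` L' \<union> Inr ` J') (Inl (i, j)) in
     (is_child L' J' (Inl i) (Inr j) \<longrightarrow>
        x = (\<Sum>k\<in>Cnodes (subtree L' J' (Inl i)). lam k)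
            - (\<Sum>l\<in>Snodes (subtree L' J' (Inl i)). mu l - eps)) \<and>
     (is_child L' J' (Inr j) (Inl i) \<longrightarrow>
        x = (\<Sum>l\<in>Snodes (subtree L' J' (Inr j)). mu l - eps)
            - (\<Sum>k\<in>Cnodes (subtree L' J' (Inr j)). lam k)) \<and>
     ((i, j) \<notin> L' \<longrightarrow> x = 0)" if ij: "(i, j) \<in> L" for i j
  proof -
    define x where "x = basic_solution I J L lam mu eps (Inl ` L' \<union> Inr ` J') (Inl (i, j))"
    have c1: "x = (\<Sum>k\<in>Cnodes (subtree L' J' (Inl i)). lam k)
            - (\<Sum>l\<in>Snodes (subtree L' J' (Inl i)). mu l - eps)"
      if ch: "is_child L' J' (Inl i) (Inr j)"
    proof -
      have P: "(Inl i, Inr j) \<in> parent_rel L' J'" using ch unfolding is_child_def .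
      show ?thesis using main[OF P, of lam mu eps] sum_split[OF fin_sub[OF P], of lam mu eps]
        unfolding x_def by simp
    qed
    have c2: "x = (\<Sum>l\<in>Snodes (subtree L' J' (Inr j)). mu l - eps)
            - (\<Sum>k\<in>Cnodes (subtree L' J' (Inr j)). lam k)"
      if ch: "is_child L' J' (Inr j) (Inl i)"
    proof -
      have P: "(Inr j, Inl i) \<in> parent_rel L' J'" using ch unfolding is_child_def .
      show ?thesis using main[OF P, of lam mu eps] sum_split[OF fin_sub[OF P], of lam mu eps]
        unfolding x_def by simp
    qed
    have c3: "x = 0" if "(i, j) \<notin> L'"
      using basic_sol[of lam mu eps] that unfolding solP_def x_def by auto
    show ?thesis unfolding Let_def x_def[symmetric] using c1 c2 c3 by blast
  qed
  then show ?thesis by blast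
qed

end
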